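(* Let $N\ge3$, $p>1$, and let $g:\mathbb R^N\times\mathbb R\to\mathbb R$ be a Carathéodory function such that there exist $1<q<p$ and $\eta\in L^{p/(p-q)}(\mathbb R^N)$ with $0\le g(x,t)t\le\eta(x)|t|^q$ for a.e. $x$ and all $t$. Let $(w_n)_n,(v_n)_n\subset X$ and $v,w\in X$ be such that, for some constants $M_1,M_2>0$: $\|w_n\|_W\le M_1$ for all $n$ and $w_n\to w$ a.e. in $\mathbb R^N$; $\|v_n\|_W\le M_2$ for all $n$ and $v_n\to0$ a.e. in $\mathbb R^N$. Then $\lim_{n\to+\infty}\int_{\mathbb R^N}g(x,w_n)v_n\,dx=0$.
   Context: $X=W^{1,p}(\mathbb R^N)\cap L^\infty(\mathbb R^N)$, $\|u\|_W=(|\nabla u|_p^p+|u|_p^p)^{1/p}$. *)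

theory Defs
  imports "HOL-Analysis.Analysis"
begin

text \<open>Smooth (C-infinity) real functions on a Euclidean space: all iterated directional
  (Frechet) derivatives exist everywhere.\<close>
coinductive smooth_fun :: "('a::euclidean_space \<Rightarrow> real) \<Rightarrow> bool" where
  "f differentiable_on UNIV \<Longrightarrow> (\<forall>v. smooth_fun (\<lambda>x. frechet_derivative f (at x) v))
   \<Longrightarrow> smooth_fun f"

definition test_fun :: "('a::euclidean_space \<Rightarrow> real) \<Rightarrow> bool" where
  "test_fun \<phi> \<longleftrightarrow> smooth_fun \<phi> \<and> compact (closure {x. \<phi> x \<noteq> 0})"

definition Lp :: "real \<Rightarrow> ('a::euclidean_space \<Rightarrow> real) \<Rightarrow> bool" where
  "Lp p u \<longleftrightarrow> u \<in> borel_measurable lebesgue \<and> integrable lebesgue (\<lambda>x. \<bar>u x\<bar> powr p)"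

definition Linfty :: "('a::euclidean_space \<Rightarrow> real) \<Rightarrow> bool" where
  "Linfty u \<longleftrightarrow> u \<in> borel_measurable lebesgue \<and> (\<exists>C. AE x in lebesgue. \<bar>u x\<bar> \<le> C)"

definition weak_grad :: "('a::euclidean_space \<Rightarrow> real) \<Rightarrow> ('a \<Rightarrow> 'a) \<Rightarrow> bool" where
  "weak_grad u G \<longleftrightarrow> G \<in> borel_measurable lebesgue \<and>
     (\<forall>\<phi>. test_fun \<phi> \<longrightarrow> (\<forall>i\<in>Basis.
        (\<integral>x. u x * frechet_derivative \<phi> (at x) i \<partial>lebesgue)
          = - (\<integral>x. (G x \<bullet> i) * \<phi> x \<partial>lebesgue)))"

definition W1p :: "real \<Rightarrow> ('a::euclidean_space \<Rightarrow> real) \<Rightarrow> bool" where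
  "W1p p u \<longleftrightarrow> Lp p u \<and> (\<exists>G. weak_grad u G \<and> Lp p (\<lambda>x. norm (G x)))"

definition in_X :: "real \<Rightarrow> ('a::euclidean_space \<Rightarrow> real) \<Rightarrow> bool" where
  "in_X p u \<longleftrightarrow> W1p p u \<and> Linfty u"

text \<open>Weak gradient (unique a.e., so the norm below does not depend on the choice).\<close>
definition wgrad :: "('a::euclidean_space \<Rightarrow> real) \<Rightarrow> 'a \<Rightarrow> 'a" where
  "wgrad u = (SOME G. weak_grad u G)"

definition W_norm :: "real \<Rightarrow> ('a::euclidean_space \<Rightarrow> real) \<Rightarrow> real" where
  "W_norm p u = ((\<integral>x. norm (wgrad u x) powr p \<partial>lebesgue)
                 + (\<integral>x. \<bar>u x\<bar> powr p \<partial>lebesgue)) powr (1 / p)"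

definition caratheodory :: "('a::euclidean_space \<Rightarrow> real \<Rightarrow> real) \<Rightarrow> bool" where
  "caratheodory g \<longleftrightarrow> (\<forall>t. (\<lambda>x. g x t) \<in> borel_measurable lebesgue) \<and>
     (AE x in lebesgue. continuous_on UNIV (g x))"

end

theory Submission
  imports Defs
begin

lemma young_split:
  fixes a y l p q r :: real
  assumes a: "0 \<le> a" and y: "0 \<le> y" and l: "0 < l" and q: "1 < q" "q < p"
    and r: "r = p / (p - q + 1)"
  shows "a powr (q-1) * y \<le> l * a powr p + l powr (1-r) * y powr r"
proof (cases "y \<le> l * a powr (p-q+1)")
  case True
  have "a powr (q-1) * y \<le> a powr (q-1) * (l * a powr (p-q+1))"
    using True by (simp add: mult_left_mono)
  also have "\<dots> = l * (a powr (q-1) * a powr (p-q+1))" by simp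
  also have "a powr (q-1) * a powr (p-q+1) = a powr p"
    by (simp add: powr_add[symmetric])
  finally have "a powr (q-1) * y \<le> l * a powr p" .
  moreover have "0 \<le> l powr (1-r) * y powr r" by simp
  moreover have "0 \<le> l * a powr p" using l by simp
  ultimately show ?thesis by linarith
next
  case False
  hence lt: "a powr (p-q+1) < y / l" using l by (simp add: field_simps)
  have ypos: "0 < y" using False l
    by (smt (verit) mult_nonneg_nonneg powr_ge_zero)
  have e: "(q-1)/(p-q+1) = r - 1" using r q by (simp add: field_simps)
  have "a powr (q-1) = (a powr (p-q+1)) powr ((q-1)/(p-q+1))"
    using q by (simp add: powr_powr)
  also have "\<dots> \<le> (y/l) powr (r-1)"
    using lt q e by (metis less_eq_real_def powr_ge_zero powr_mono2 divide_nonneg_pos diff_gt_0_iff_gt add_pos_pos zero_less_one le_less)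
  finally have "a powr (q-1) * y \<le> (y/l) powr (r-1) * y"
    using ypos by (simp add: mult_right_mono)
  also have "(y/l) powr (r-1) * y = l powr (1-r) * y powr r"
  proof -
    have "(y/l) powr (r-1) = y powr (r-1) / l powr (r-1)" using ypos l by (simp add: powr_divide)
    moreover have "y powr (r-1) * y = y powr r" using ypos by (simp add: powr_diff)
    moreover have "1 / l powr (r-1) = l powr (1-r)" using l by (simp add: powr_minus_divide[symmetric] powr_minus)
    ultimately show ?thesis using l ypos by (simp add: field_simps powr_diff)
  qed
  finally show ?thesis using l by (smt (verit) mult_nonneg_nonneg powr_ge_zero)
qed

lemma trunc_split:
  fixes e b K s p r :: real
  assumes e: "0 \<le> e" and b: "0 \<le> b" and K: "0 < K" and s: "0 < s" and p: "0 < p" and r: "0 < r"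
    and rel: "r * p / s + r = p"
  shows "(e*b) powr r \<le> min (e*b) (K * e powr (1 + s/p)) powr r + K powr (-(r*p/s)) * b powr p"
proof (cases "e*b \<le> K * e powr (1 + s/p)")
  case True
  then show ?thesis by simp
next
  case False
  hence epos: "0 < e" using K e by (cases "e = 0") auto
  have "e * b > e * (K * e powr (s/p))" using False epos by (simp add: powr_add mult_ac)
  hence bgt: "b > K * e powr (s/p)" using epos by simp
  hence "e powr (s/p) < b / K" using K by (simp add: field_simps)
  hence "(e powr (s/p)) powr (p/s) \<le> (b/K) powr (p/s)"
    using s p by (intro powr_mono2) auto
  hence eb: "e \<le> (b/K) powr (p/s)" using s p epos by (simp add: powr_powr)
  have "(e*b) powr r \<le> ((b/K) powr (p/s) * b) powr r"
    using eb b e r by (intro powr_mono2 mult_right_mono) auto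
  also have "\<dots> = K powr (-(r*p/s)) * b powr p"
  proof -
    have bpos: "0 < b" using bgt K epos by (smt (verit) mult_pos_pos powr_gt_zero)
    have "((b/K) powr (p/s) * b) powr r = (b/K) powr (p/s*r) * b powr r"
      using bpos K by (simp add: powr_mult powr_powr)
    also have "\<dots> = b powr (p/s*r) / K powr (p/s*r) * b powr r" using bpos K by (simp add: powr_divide)
    also have "\<dots> = b powr (r*p/s + r) / K powr (r*p/s)" using bpos by (simp add: powr_add mult_ac)
    also have "\<dots> = K powr (-(r*p/s)) * b powr p" using rel K by (simp add: powr_minus divide_inverse)
    finally show ?thesis .
  qed
  finally show ?thesis by (smt (verit) powr_ge_zero)
qed

lemma Wn_bound:
  fixes u :: "'a::euclidean_space \<Rightarrow> real"
  assumes "W_norm p u \<le> M" "0 < p"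
  shows "(\<integral>x. \<bar>u x\<bar> powr p \<partial>lebesgue) \<le> M powr p"
proof -
  define A where "A = (\<integral>x. norm (wgrad u x) powr p \<partial>lebesgue)"
  define B where "B = (\<integral>x. \<bar>u x\<bar> powr p \<partial>lebesgue)"
  have A: "0 \<le> A" unfolding A_def by (rule integral_nonneg_AE) simp
  have B: "0 \<le> B" unfolding B_def by (rule integral_nonneg_AE) simp
  have W: "(A + B) powr (1/p) \<le> M" using assms(1) unfolding W_norm_def A_def B_def .
  have "A + B = ((A + B) powr (1/p)) powr p" using A B assms(2) by (simp add: powr_powr)
  also have "\<dots> \<le> M powr p" using W assms(2) by (intro powr_mono2) auto
  finally show ?thesis using A unfolding B_def[symmetric] by linarith
qed

lemma g_zero:
  fixes h :: "real \<Rightarrow> real"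
  assumes "continuous_on UNIV h" "\<forall>t. 0 \<le> h t * t"
  shows "h 0 = 0"
proof -
  have c: "isCont h 0" using assms(1) by (simp add: continuous_on_eq_continuous_at)
  have l1: "(\<lambda>n. h (inverse (real (Suc n)))) \<longlonglongrightarrow> h 0"
    using isCont_tendsto_compose[OF c LIMSEQ_inverse_real_of_nat] .
  have l2: "(\<lambda>n. h (- inverse (real (Suc n)))) \<longlonglongrightarrow> h 0"
  proof -
    have "(\<lambda>n. - inverse (real (Suc n))) \<longlonglongrightarrow> 0"
      using tendsto_minus[OF LIMSEQ_inverse_real_of_nat] by simp
    from isCont_tendsto_compose[OF c this] show ?thesis .
  qed
  have p1: "0 \<le> h (inverse (real (Suc n)))" for n
    using assms(2)[rule_format, of "inverse (real (Suc n))"] by (simp add: zero_le_mult_iff)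
  have p2: "h (- inverse (real (Suc n))) \<le> 0" for n
    using assms(2)[rule_format, of "- inverse (real (Suc n))"]
    by (simp add: mult_le_0_iff)
  have "0 \<le> h 0" using l1 p1 by (intro LIMSEQ_le_const) auto
  moreover have "h 0 \<le> 0" using l2 p2 by (intro LIMSEQ_le_const2) auto
  ultimately show ?thesis by simp
qed

lemma pw_bound:
  fixes G e w v l K p q r s :: real
  assumes e: "0 \<le> e" and G: "\<bar>G\<bar> \<le> e * \<bar>w\<bar> powr (q-1)" and l: "0 < l" and K: "0 < K"
    and q: "1 < q" "q < p" and r: "r = p / (p - q + 1)" and s: "s = p / (p - q)"
  shows "\<bar>G * v\<bar> \<le> l * \<bar>w\<bar> powr p + l powr (1-r) *
     (min (e * \<bar>v\<bar>) (K * e powr (1 + s/p)) powr r + K powr (-(r*p/s)) * \<bar>v\<bar> powr p)"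
proof -
  have ps: "p / s = p - q" using q unfolding s by (simp add: field_simps)
  have rel: "r * p / s + r = p"
  proof -
    have "r * p / s = r * (p / s)" by simp
    also have "\<dots> = r * (p - q)" using ps by simp
    finally have "r * p / s + r = r * (p - q + 1)" by (simp add: algebra_simps)
    also have "\<dots> = p" using q unfolding r by simp
    finally show ?thesis .
  qed
  have "\<bar>G * v\<bar> \<le> e * \<bar>w\<bar> powr (q-1) * \<bar>v\<bar>"
    using G by (simp add: abs_mult mult_right_mono)
  also have "\<dots> = \<bar>w\<bar> powr (q-1) * (e * \<bar>v\<bar>)" by simp
  also have "\<dots> \<le> l * \<bar>w\<bar> powr p + l powr (1-r) * (e * \<bar>v\<bar>) powr r"
    using young_split[OF _ _ l q r, of "\<bar>w\<bar>" "e * \<bar>v\<bar>"] e by simp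
  finally have A: "\<bar>G * v\<bar> \<le> l * \<bar>w\<bar> powr p + l powr (1-r) * (e * \<bar>v\<bar>) powr r" .
  have B: "(e * \<bar>v\<bar>) powr r \<le> min (e * \<bar>v\<bar>) (K * e powr (1 + s/p)) powr r + K powr (-(r*p/s)) * \<bar>v\<bar> powr p"
    using trunc_split[OF e _ K _ _ _ rel] q unfolding r s by auto
  have "l powr (1-r) * (e * \<bar>v\<bar>) powr r \<le> l powr (1-r) * (min (e * \<bar>v\<bar>) (K * e powr (1 + s/p)) powr r + K powr (-(r*p/s)) * \<bar>v\<bar> powr p)"
    using B by (intro mult_left_mono) auto
  with A show ?thesis by linarith
qed

theorem lemma4p8:
  fixes g :: "'a::euclidean_space \<Rightarrow> real \<Rightarrow> real"
    and p q M1 M2 :: real and \<eta> :: "'a \<Rightarrow> real"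
    and w v :: "'a \<Rightarrow> real" and ws vs :: "nat \<Rightarrow> 'a \<Rightarrow> real"
  assumes "DIM('a) \<ge> 3" and "p > 1"
    and "caratheodory g"
    and "1 < q" and "q < p"
    and "Lp (p / (p - q)) \<eta>"
    and "AE x in lebesgue. \<forall>t. 0 \<le> g x t * t \<and> g x t * t \<le> \<eta> x * \<bar>t\<bar> powr q"
    and "\<And>n. in_X p (ws n)" and "\<And>n. in_X p (vs n)"
    and "in_X p w" and "in_X p v"
    and "M1 > 0" and "M2 > 0"
    and "\<And>n. W_norm p (ws n) \<le> M1"
    and "AE x in lebesgue. (\<lambda>n. ws n x) \<longlonglongrightarrow> w x"
    and "\<And>n. W_norm p (vs n) \<le> M2"
    and "AE x in lebesgue. (\<lambda>n. vs n x) \<longlonglongrightarrow> 0"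
  shows "(\<lambda>n. \<integral>x. g x (ws n x) * vs n x \<partial>lebesgue) \<longlonglongrightarrow> 0"
proof -
  note q = assms(4,5)
  define s where "s = p / (p - q)"
  define r where "r = p / (p - q + 1)"
  have p0: "0 < p" using assms(2) by simp
  have s0: "0 < s" unfolding s_def using q by simp
  have r0: "0 < r" unfolding r_def using q by simp
  have ps: "p / s = p - q" using q unfolding s_def by (simp add: field_simps)
  have rel: "r * p / s + r = p"
  proof -
    have "r * p / s = r * (p / s)" by simp
    also have "\<dots> = r * (p - q)" using ps by simp
    finally have "r * p / s + r = r * (p - q + 1)" by (simp add: algebra_simps)
    also have "\<dots> = p" using q unfolding r_def by simp
    finally show ?thesis .
  qed
  have rel2: "(1 + s/p) * r = s"
  proof -
    have "(1 + s/p) * r = (s/p) * (r * p / s + r)" using s0 p0 by (simp add: field_simps)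
    also have "\<dots> = s" using rel p0 by simp
    finally show ?thesis .
  qed
  have etam[measurable]: "\<eta> \<in> borel_measurable lebesgue"
    and etai: "integrable lebesgue (\<lambda>x. \<bar>\<eta> x\<bar> powr s)"
    using assms(6) unfolding Lp_def s_def by auto
  have wm[measurable]: "ws n \<in> borel_measurable lebesgue"
    and wi: "integrable lebesgue (\<lambda>x. \<bar>ws n x\<bar> powr p)" for n
    using assms(8)[of n] unfolding in_X_def W1p_def Lp_def by auto
  have vm[measurable]: "vs n \<in> borel_measurable lebesgue"
    and vi: "integrable lebesgue (\<lambda>x. \<bar>vs n x\<bar> powr p)" for n
    using assms(9)[of n] unfolding in_X_def W1p_def Lp_def by auto
  have wb: "(\<integral>x. \<bar>ws n x\<bar> powr p \<partial>lebesgue) \<le> M1 powr p" for n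
    using Wn_bound[OF assms(14) p0] .
  have vb: "(\<integral>x. \<bar>vs n x\<bar> powr p \<partial>lebesgue) \<le> M2 powr p" for n
    using Wn_bound[OF assms(16) p0] .
  have AEg: "AE x in lebesgue. 0 \<le> \<eta> x \<and> (\<forall>t. \<bar>g x t\<bar> \<le> \<eta> x * \<bar>t\<bar> powr (q-1))"
    using assms(7) conjunct2[OF assms(3)[unfolded caratheodory_def]]
  proof eventually_elim
    case (elim x)
    have e0: "0 \<le> \<eta> x" using elim(1) by (metis order.trans powr_one_eq_one abs_one mult.right_neutral mult_1_right)
    have g0: "g x 0 = 0" using g_zero[of "g x"] elim by auto
    have "\<bar>g x t\<bar> \<le> \<eta> x * \<bar>t\<bar> powr (q-1)" for t
    proof (cases "t = 0")
      case True then show ?thesis using g0 e0 by simp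
    next
      case False
      have "\<bar>g x t\<bar> * \<bar>t\<bar> = g x t * t" using elim(1) by (metis abs_mult abs_of_nonneg)
      also have "\<dots> \<le> \<eta> x * \<bar>t\<bar> powr q" using elim(1) by auto
      also have "\<bar>t\<bar> powr q = \<bar>t\<bar> powr (q-1) * \<bar>t\<bar>" using False by (simp add: powr_diff)
      finally have "\<bar>g x t\<bar> * \<bar>t\<bar> \<le> (\<eta> x * \<bar>t\<bar> powr (q-1)) * \<bar>t\<bar>" by (simp add: mult_ac)
      then show ?thesis using False by simp
    qed
    then show ?case using e0 by auto
  qed
  define F where "F K n x = min (\<eta> x * \<bar>vs n x\<bar>) (K * \<eta> x powr (1 + s/p)) powr r" for K n x
  define D where "D K n = (\<integral>x. F K n x \<partial>lebesgue)" for K n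
  have Fm[measurable]: "(\<lambda>x. F K n x) \<in> borel_measurable lebesgue" for K n
    unfolding F_def by measurable
  have Fdom: "AE x in lebesgue. norm (F K n x) \<le> K powr r * \<bar>\<eta> x\<bar> powr s" if K: "0 < K" for K n
    using AEg
  proof eventually_elim
    case (elim x)
    have "norm (F K n x) = F K n x" unfolding F_def by simp
    also have "\<dots> \<le> (K * \<eta> x powr (1 + s/p)) powr r" unfolding F_def
      using elim K r0 by (intro powr_mono2) auto
    also have "\<dots> = K powr r * \<eta> x powr ((1 + s/p) * r)" using K elim by (simp add: powr_mult powr_powr)
    also have "\<dots> = K powr r * \<bar>\<eta> x\<bar> powr s" using rel2 elim by simp
    finally show ?case .
  qed
  have Fi: "integrable lebesgue (\<lambda>x. F K n x)" if "0 < K" for K n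
  proof (rule Bochner_Integration.integrable_bound[where f="\<lambda>x. K powr r * \<bar>\<eta> x\<bar> powr s"])
    show "integrable lebesgue (\<lambda>x. K powr r * \<bar>\<eta> x\<bar> powr s)" using etai by auto
    show "AE x in lebesgue. norm (F K n x) \<le> norm (K powr r * \<bar>\<eta> x\<bar> powr s)"
      using Fdom[OF that, of n] by (auto elim: eventually_mono)
  qed simp
  have Dlim: "(\<lambda>n. D K n) \<longlonglongrightarrow> 0" if K: "0 < K" for K
  proof -
    have i1: "integrable lebesgue (\<lambda>x. K powr r * \<bar>\<eta> x\<bar> powr s)" using etai by auto
    have i2: "\<And>n. AE x in lebesgue. norm (F K n x) \<le> K powr r * \<bar>\<eta> x\<bar> powr s" using Fdom[OF K] by auto
    have i3: "AE x in lebesgue. (\<lambda>n. F K n x) \<longlonglongrightarrow> 0" using AEg assms(17)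
      proof eventually_elim
        case (elim x)
        have "(\<lambda>n. min (\<eta> x * \<bar>vs n x\<bar>) (K * \<eta> x powr (1 + s/p))) \<longlonglongrightarrow> min (\<eta> x * \<bar>0\<bar>) (K * \<eta> x powr (1 + s/p))"
          by (intro tendsto_intros elim(2))
        also have "min (\<eta> x * \<bar>0\<bar>) (K * \<eta> x powr (1 + s/p)) = 0" using K by simp
        finally have "(\<lambda>n. min (\<eta> x * \<bar>vs n x\<bar>) (K * \<eta> x powr (1 + s/p))) \<longlonglongrightarrow> 0" .
        then show ?case unfolding F_def
          by (rule tendsto_zero_powrI[where b=r]) (use elim K r0 in auto)
      qed
    have i0: "(\<lambda>x. 0::real) \<in> borel_measurable lebesgue" by simp
    note X = integral_dominated_convergence[OF i0 Fm i1 i3 i2]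
    then show ?thesis unfolding D_def by simp
  qed
  define I where "I n = (\<integral>x. g x (ws n x) * vs n x \<partial>lebesgue)" for n
  have bound: "\<bar>I n\<bar> \<le> l * M1 powr p + l powr (1-r) * (D K n + K powr (-(r*p/s)) * M2 powr p)"
    if l: "0 < l" and K: "0 < K" for l K n
  proof -
    define h where "h x = l * \<bar>ws n x\<bar> powr p + l powr (1-r) * (F K n x + K powr (-(r*p/s)) * \<bar>vs n x\<bar> powr p)" for x
    have hi: "integrable lebesgue h" unfolding h_def
      using wi vi Fi[OF K] by auto
    have hint: "(\<integral>x. h x \<partial>lebesgue) = l * (\<integral>x. \<bar>ws n x\<bar> powr p \<partial>lebesgue) + l powr (1-r) * (D K n + K powr (-(r*p/s)) * (\<integral>x. \<bar>vs n x\<bar> powr p \<partial>lebesgue))"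
      unfolding h_def D_def using wi vi Fi[OF K] by simp
    have hle: "(\<integral>x. h x \<partial>lebesgue) \<le> l * M1 powr p + l powr (1-r) * (D K n + K powr (-(r*p/s)) * M2 powr p)"
    proof -
      have "l * (\<integral>x. \<bar>ws n x\<bar> powr p \<partial>lebesgue) \<le> l * M1 powr p" using wb l by simp
      moreover have "K powr (-(r*p/s)) * (\<integral>x. \<bar>vs n x\<bar> powr p \<partial>lebesgue) \<le> K powr (-(r*p/s)) * M2 powr p"
        using vb by (intro mult_left_mono) auto
      ultimately show ?thesis unfolding hint
        by (smt (verit) mult_left_mono powr_ge_zero)
    qed
    have pw: "AE x in lebesgue. \<bar>g x (ws n x) * vs n x\<bar> \<le> h x" using AEg
    proof eventually_elim
      case (elim x)
      show ?case unfolding h_def F_def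
        by (rule pw_bound[OF _ _ l K q r_def s_def]) (use elim in auto)
    qed
    show ?thesis
    proof (cases "integrable lebesgue (\<lambda>x. g x (ws n x) * vs n x)")
      case True
      have "\<bar>I n\<bar> \<le> (\<integral>x. \<bar>g x (ws n x) * vs n x\<bar> \<partial>lebesgue)"
        unfolding I_def using integral_norm_bound[of lebesgue "\<lambda>x. g x (ws n x) * vs n x"] by simp
      also have "\<dots> \<le> (\<integral>x. h x \<partial>lebesgue)"
        by (rule integral_mono_AE[OF _ hi pw]) (use True in auto)
      finally show ?thesis using hle by linarith
    next
      case False
      then have "I n = 0" unfolding I_def by (simp add: not_integrable_integral_eq)
      moreover have "0 \<le> (\<integral>x. h x \<partial>lebesgue)"
        by (rule integral_nonneg_AE) (use pw in \<open>auto elim: eventually_mono\<close>)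
      ultimately show ?thesis using hle by linarith
    qed
  qed
  have "I \<longlonglongrightarrow> 0"
  proof (rule LIMSEQ_I)
    fix \<epsilon> :: real assume e: "0 < \<epsilon>"
    define l where "l = \<epsilon> / (4 * (M1 powr p + 1))"
    have l0: "0 < l" unfolding l_def using e by (simp add: add_nonneg_pos)
    have lM: "l * M1 powr p < \<epsilon> / 4"
    proof -
      have "l * M1 powr p = \<epsilon> / 4 * (M1 powr p / (M1 powr p + 1))" unfolding l_def by (simp add: field_simps)
      also have "\<dots> < \<epsilon> / 4 * 1" using e by (intro mult_strict_left_mono) (auto simp: add_nonneg_pos)
      finally show ?thesis by simp
    qed
    define c where "c = l powr (1-r)"
    have c0: "0 < c" unfolding c_def using l0 by simp
    have "((\<lambda>K. c * (K powr (-(r*p/s)) * M2 powr p)) \<longlongrightarrow> c * (0 * M2 powr p)) at_top"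
      by (intro tendsto_intros tendsto_neg_powr) (use r0 p0 s0 in \<open>auto simp: filterlim_ident\<close>)
    then have "eventually (\<lambda>K. c * (K powr (-(r*p/s)) * M2 powr p) < \<epsilon> / 4) at_top"
      using e by (intro order_tendstoD) auto
    then obtain K0 where K0: "\<And>K. K \<ge> K0 \<Longrightarrow> c * (K powr (-(r*p/s)) * M2 powr p) < \<epsilon> / 4"
      by (auto simp: eventually_at_top_linorder)
    define K where "K = max K0 1"
    have K: "0 < K" unfolding K_def by simp
    have cK: "c * (K powr (-(r*p/s)) * M2 powr p) < \<epsilon> / 4" using K0 unfolding K_def by simp
    have "eventually (\<lambda>n. norm (D K n) < \<epsilon> / (4 * c)) sequentially"
      using order_tendstoD(2)[OF tendsto_norm_zero[OF Dlim[OF K]], of "\<epsilon> / (4 * c)"] e c0 by auto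
    then obtain N where N: "\<And>n. n \<ge> N \<Longrightarrow> norm (D K n) < \<epsilon> / (4 * c)"
      by (auto simp: eventually_sequentially)
    show "\<exists>no. \<forall>n\<ge>no. norm (I n - 0) < \<epsilon>"
    proof (intro exI allI impI)
      fix n assume n: "N \<le> n"
      have cD: "c * D K n < \<epsilon> / 4"
      proof -
        have "c * D K n \<le> c * norm (D K n)" using c0 by (intro mult_left_mono) auto
        also have "\<dots> < c * (\<epsilon> / (4 * c))" using N[OF n] c0 by (intro mult_strict_left_mono) auto
        also have "\<dots> = \<epsilon> / 4" using c0 by simp
        finally show ?thesis .
      qed
      have "\<bar>I n\<bar> \<le> l * M1 powr p + c * (D K n + K powr (-(r*p/s)) * M2 powr p)"
        using bound[OF l0 K] unfolding c_def .
      also have "\<dots> = l * M1 powr p + c * D K n + c * (K powr (-(r*p/s)) * M2 powr p)" by (simp add: algebra_simps)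
      finally show "norm (I n - 0) < \<epsilon>" using lM cD cK by simp
    qed
  qed
  then show ?thesis unfolding I_def .
qed

end
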